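(* Let $C\in M_n(\mathbb{C})$ be a contraction and $d=\operatorname{rank}(I-C^*C)$. Then every level of the partial isometry tower of $C$ has the Circularity property if and only if $T_1,T_2,\dots,T_{d+1}$ have the Circularity property. Moreover, it is also equivalent that $T_0,T_1,\dots,T_d$ have the Circularity property.
   Context: For $X\in M_n(\mathbb{C})$, $H_X(\theta):=\frac12(e^{-i\theta}X+e^{i\theta}X^* )$; $X$ has the Circularity property if the spectrum of $H_X(\theta)$ is independent of $\theta\in\mathbb{R}$. A contraction is a matrix with $\|C\|\le1$. For a contraction $C$: $D_C=I-C^*C$, $d=\operatorname{rank}D_C$, $B_C$ is a $d\times n$ matrix of full row rank with $B_C^*B_C=D_C$ (matrix of $D_C^{1/2}$ on $\operatorname{Im}D_C$, zero on its complement), $\mathcal{A}(C)=\begin{bmatrix}0&B_C\\0&C\end{bmatrix}$, and the partial isometry tower is $T_0=C$, $T_{j+1}=\mathcal{A}(T_j)$. *)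

theory Defs
  imports Complex_Main "Jordan_Normal_Form.Schur_Decomposition" "Jordan_Normal_Form.DL_Rank"
begin

definition vnorm :: "complex vec \<Rightarrow> real" where
  "vnorm v = sqrt (\<Sum>i<dim_vec v. (cmod (v $ i))\<^sup>2)"

definition contraction :: "complex mat \<Rightarrow> bool" where
  "contraction C \<longleftrightarrow> (\<forall>v \<in> carrier_vec (dim_col C). vnorm (C *\<^sub>v v) \<le> vnorm v)"

definition Hmat :: "complex mat \<Rightarrow> real \<Rightarrow> complex mat" where
  "Hmat X \<theta> = (1/2) \<cdot>\<^sub>m (exp (- \<i> * of_real \<theta>) \<cdot>\<^sub>m X + exp (\<i> * of_real \<theta>) \<cdot>\<^sub>m mat_adjoint X)"

definition spectrum_mat :: "complex mat \<Rightarrow> complex set" where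
  "spectrum_mat A = {k. eigenvalue A k}"

definition circularity :: "complex mat \<Rightarrow> bool" where
  "circularity X \<longleftrightarrow> (\<forall>\<theta> \<theta>'. spectrum_mat (Hmat X \<theta>) = spectrum_mat (Hmat X \<theta>'))"

definition defect :: "complex mat \<Rightarrow> complex mat" where
  "defect C = 1\<^sub>m (dim_col C) - mat_adjoint C * C"

definition is_B :: "complex mat \<Rightarrow> complex mat \<Rightarrow> bool" where
  "is_B C B \<longleftrightarrow> (let d = vec_space.rank (dim_col C) (defect C) in
     B \<in> carrier_mat d (dim_col C) \<and> vec_space.rank d B = d \<and> mat_adjoint B * B = defect C)"

definition A_op :: "complex mat \<Rightarrow> complex mat \<Rightarrow> complex mat" where
  "A_op B C = four_block_mat (0\<^sub>m (dim_row B) (dim_row B)) B (0\<^sub>m (dim_row C) (dim_row B)) C"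

definition is_tower :: "complex mat \<Rightarrow> (nat \<Rightarrow> complex mat) \<Rightarrow> bool" where
  "is_tower C T \<longleftrightarrow> T 0 = C \<and> (\<forall>j. \<exists>B. is_B (T j) B \<and> T (Suc j) = A_op B (T j))"

end

theory Submission
  imports Defs
begin
lemma one_smult_mat'[simp]: "(1::'a::monoid_mult) \<cdot>\<^sub>m A = A"
  by (rule eq_matI, auto)
lemma smult_smult_mat: "a \<cdot>\<^sub>m (b \<cdot>\<^sub>m (A :: 'a :: semigroup_mult mat)) = (a * b) \<cdot>\<^sub>m A"
  by (rule eq_matI, auto simp: mult.assoc)
lemma schur_det:
  fixes A4 :: "complex mat"
  assumes A4: "A4 \<in> carrier_mat N N" and B: "B \<in> carrier_mat m N" and C3: "C3 \<in> carrier_mat N m" and al: "\<alpha> \<noteq> 0"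
  shows "det (four_block_mat (\<alpha> \<cdot>\<^sub>m 1\<^sub>m m) B C3 A4) = \<alpha>^m * det (A4 - (1/\<alpha>) \<cdot>\<^sub>m (C3 * B))"
proof -
  let ?S = "A4 - (1/\<alpha>) \<cdot>\<^sub>m (C3 * B)"
  let ?L = "four_block_mat (\<alpha> \<cdot>\<^sub>m 1\<^sub>m m) (0\<^sub>m m N) C3 (1\<^sub>m N)"
  let ?R = "four_block_mat (1\<^sub>m m) ((1/\<alpha>) \<cdot>\<^sub>m B) (0\<^sub>m N m) ?S"
  have S: "?S \<in> carrier_mat N N" using A4 B C3 by auto
  have c: "\<alpha> \<cdot>\<^sub>m 1\<^sub>m m \<in> carrier_mat m m" "0\<^sub>m m N \<in> carrier_mat m N" "C3 \<in> carrier_mat N m" "1\<^sub>m N \<in> carrier_mat N N"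
    "1\<^sub>m m \<in> carrier_mat m m" "(1/\<alpha>) \<cdot>\<^sub>m B \<in> carrier_mat m N" "0\<^sub>m N m \<in> carrier_mat N m" "?S \<in> carrier_mat N N"
    using S B C3 by auto
  have "?L * ?R = four_block_mat (\<alpha> \<cdot>\<^sub>m 1\<^sub>m m * 1\<^sub>m m + 0\<^sub>m m N * 0\<^sub>m N m)
      (\<alpha> \<cdot>\<^sub>m 1\<^sub>m m * ((1/\<alpha>) \<cdot>\<^sub>m B) + 0\<^sub>m m N * ?S)
      (C3 * 1\<^sub>m m + 1\<^sub>m N * 0\<^sub>m N m) (C3 * ((1/\<alpha>) \<cdot>\<^sub>m B) + 1\<^sub>m N * ?S)"
    by (rule mult_four_block_mat[OF c])
  also have "\<dots> = four_block_mat (\<alpha> \<cdot>\<^sub>m 1\<^sub>m m) B C3 A4"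
  proof (rule cong_four_block_mat)
    show "\<alpha> \<cdot>\<^sub>m 1\<^sub>m m * 1\<^sub>m m + 0\<^sub>m m N * 0\<^sub>m N m = \<alpha> \<cdot>\<^sub>m 1\<^sub>m m" by simp
    have "\<alpha> \<cdot>\<^sub>m 1\<^sub>m m * ((1/\<alpha>) \<cdot>\<^sub>m B) = \<alpha> \<cdot>\<^sub>m (1\<^sub>m m * ((1/\<alpha>) \<cdot>\<^sub>m B))" by (rule mult_smult_assoc_mat[of _ m m _ N], insert B, auto)
    also have "\<dots> = \<alpha> \<cdot>\<^sub>m ((1/\<alpha>) \<cdot>\<^sub>m B)" using B by simp
    also have "\<dots> = B" using al by (simp add: smult_smult_mat)
    finally show "\<alpha> \<cdot>\<^sub>m 1\<^sub>m m * ((1/\<alpha>) \<cdot>\<^sub>m B) + 0\<^sub>m m N * ?S = B"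
      using B S by (simp add: left_mult_zero_mat[OF S])
    show "C3 * 1\<^sub>m m + 1\<^sub>m N * 0\<^sub>m N m = C3" using C3 by simp
    have e: "C3 * ((1/\<alpha>) \<cdot>\<^sub>m B) = (1/\<alpha>) \<cdot>\<^sub>m (C3 * B)" using C3 B by (simp add: mult_smult_distrib)
    show "C3 * ((1/\<alpha>) \<cdot>\<^sub>m B) + 1\<^sub>m N * ?S = A4" unfolding e using A4 B C3 S
      by (intro eq_matI, auto)
  qed
  finally have eq: "four_block_mat (\<alpha> \<cdot>\<^sub>m 1\<^sub>m m) B C3 A4 = ?L * ?R" by simp
  have dL: "det ?L = \<alpha>^m" 
    by (subst det_four_block_mat_upper_right_zero[of _ m _ N], insert C3, auto)
  have dR: "det ?R = det ?S" 
    by (subst det_four_block_mat_lower_left_zero[of _ m _ N], insert B S, auto)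
  show ?thesis unfolding eq
    by (subst det_mult[of _ "m+N"], insert C3 B S, auto simp: dL dR)
qed
lemma adj_dim[simp]: "dim_row (mat_adjoint A) = dim_col A" "dim_col (mat_adjoint A) = dim_row A"
  unfolding mat_adjoint_def by auto

lemma adj_carrier[simp]: "A \<in> carrier_mat nr nc \<Longrightarrow> mat_adjoint A \<in> carrier_mat nc nr"
  unfolding carrier_mat_def by auto

lemma adj_index[simp]: "i < dim_col A \<Longrightarrow> j < dim_row A \<Longrightarrow> mat_adjoint (A :: complex mat) $$ (i,j) = cnj (A $$ (j,i))"
  unfolding mat_adjoint_def by (auto simp: mat_of_rows_index)

lemma Hmat_carrier[simp]: "X \<in> carrier_mat N N \<Longrightarrow> Hmat X \<theta> \<in> carrier_mat N N"
  unfolding Hmat_def by auto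


lemma Hmat_index: "X \<in> carrier_mat N N \<Longrightarrow> i < N \<Longrightarrow> j < N \<Longrightarrow>
  Hmat X \<theta> $$ (i,j) = (1/2) * (exp (- \<i> * of_real \<theta>) * X $$ (i,j) + exp (\<i> * of_real \<theta>) * cnj (X $$ (j,i)))"
  unfolding Hmat_def by auto

lemma adj_four_block: assumes "A1 \<in> carrier_mat r1 c1" "A2 \<in> carrier_mat r1 c2" "A3 \<in> carrier_mat r2 c1" "A4 \<in> carrier_mat r2 c2"
  shows "mat_adjoint (four_block_mat A1 A2 A3 A4 :: complex mat) = four_block_mat (mat_adjoint A1) (mat_adjoint A3) (mat_adjoint A2) (mat_adjoint A4)"
  by (rule eq_matI, insert assms, auto)

definition G :: "complex mat \<Rightarrow> real \<Rightarrow> complex \<Rightarrow> complex \<Rightarrow> complex" where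
  "G X \<theta> l a = det (l \<cdot>\<^sub>m 1\<^sub>m (dim_row X) - Hmat X \<theta> - a \<cdot>\<^sub>m defect X)"

lemma defect_A_op: assumes Y: "Y \<in> carrier_mat N N" and B: "B \<in> carrier_mat m N"
  and BB: "mat_adjoint B * B = defect Y"
  shows "defect (A_op B Y) = four_block_mat (1\<^sub>m m) (0\<^sub>m m N) (0\<^sub>m N m) (0\<^sub>m N N)"
proof -
  have X: "A_op B Y = four_block_mat (0\<^sub>m m m) B (0\<^sub>m N m) Y" unfolding A_op_def using Y B by auto
  have adj: "mat_adjoint (A_op B Y) = four_block_mat (0\<^sub>m m m) (0\<^sub>m m N) (mat_adjoint B) (mat_adjoint Y)"
    unfolding X by (subst adj_four_block[of _ m m _ N _ N], insert Y B, auto intro!: eq_matI)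
  have c: "0\<^sub>m m m \<in> carrier_mat m m" "0\<^sub>m m N \<in> carrier_mat m N" "mat_adjoint B \<in> carrier_mat N m" "mat_adjoint Y \<in> carrier_mat N N"
     "0\<^sub>m m m \<in> carrier_mat m m" "B \<in> carrier_mat m N" "0\<^sub>m N m \<in> carrier_mat N m" "Y \<in> carrier_mat N N" using Y B by auto
  have "mat_adjoint (A_op B Y) * A_op B Y = four_block_mat (0\<^sub>m m m * 0\<^sub>m m m + 0\<^sub>m m N * 0\<^sub>m N m)
     (0\<^sub>m m m * B + 0\<^sub>m m N * Y) (mat_adjoint B * 0\<^sub>m m m + mat_adjoint Y * 0\<^sub>m N m) (mat_adjoint B * B + mat_adjoint Y * Y)"
    unfolding adj unfolding X by (rule mult_four_block_mat[OF c])
  also have "mat_adjoint B * B + mat_adjoint Y * Y = 1\<^sub>m N" unfolding BB defect_def using Y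
    by (intro eq_matI, auto)
  finally have P: "mat_adjoint (A_op B Y) * A_op B Y = four_block_mat (0\<^sub>m m m) (0\<^sub>m m N) (0\<^sub>m N m) (1\<^sub>m N)"
    using Y B by (simp add: left_mult_zero_mat[OF Y] left_mult_zero_mat[OF B])
  have dc: "dim_col (A_op B Y) = m + N" unfolding X using Y B by auto
  show ?thesis unfolding defect_def dc P by (rule eq_matI, auto)
qed

lemma G_A_op: assumes Y: "Y \<in> carrier_mat N N" and B: "B \<in> carrier_mat m N"
  and BB: "mat_adjoint B * B = defect Y" and la: "l \<noteq> a"
  shows "G (A_op B Y) \<theta> l a = (l - a)^m * G Y \<theta> l (1 / (4 * (l - a)))"
proof -
  define z where "z = exp (- \<i> * of_real \<theta>)"
  define z' where "z' = exp (\<i> * of_real \<theta>)"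
  have zz: "z' * z = 1" unfolding z_def z'_def by (simp add: exp_add[symmetric])
  have X: "A_op B Y = four_block_mat (0\<^sub>m m m) B (0\<^sub>m N m) Y" unfolding A_op_def using Y B by auto
  have Xc: "A_op B Y \<in> carrier_mat (m+N) (m+N)" unfolding X using Y B by auto
  have Xc': "four_block_mat (0\<^sub>m m m) B (0\<^sub>m N m) Y \<in> carrier_mat (m+N) (m+N)" using Xc X by simp
  have hd: "dim_row (Hmat (four_block_mat (0\<^sub>m m m) B (0\<^sub>m N m) Y) \<theta>) = m + N"
     "dim_col (Hmat (four_block_mat (0\<^sub>m m m) B (0\<^sub>m N m) Y) \<theta>) = m + N"
     "dim_row (Hmat Y \<theta>) = N" "dim_col (Hmat Y \<theta>) = N"
    using Hmat_carrier[OF Xc', of \<theta>] Hmat_carrier[OF Y, of \<theta>] by auto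
  have dr: "dim_row (A_op B Y) = m + N" using Xc by auto
  let ?M = "l \<cdot>\<^sub>m 1\<^sub>m (m+N) - Hmat (A_op B Y) \<theta> - a \<cdot>\<^sub>m defect (A_op B Y)"
  have "?M = four_block_mat ((l - a) \<cdot>\<^sub>m 1\<^sub>m m) ((- z / 2) \<cdot>\<^sub>m B) ((- z' / 2) \<cdot>\<^sub>m mat_adjoint B) (l \<cdot>\<^sub>m 1\<^sub>m N - Hmat Y \<theta>)"
    unfolding defect_A_op[OF Y B BB]
  proof (rule eq_matI)
    fix i j assume i: "i < dim_row (four_block_mat ((l - a) \<cdot>\<^sub>m 1\<^sub>m m) ((- z / 2) \<cdot>\<^sub>m B) ((- z' / 2) \<cdot>\<^sub>m mat_adjoint B) (l \<cdot>\<^sub>m 1\<^sub>m N - Hmat Y \<theta>))"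
      and j: "j < dim_col (four_block_mat ((l - a) \<cdot>\<^sub>m 1\<^sub>m m) ((- z / 2) \<cdot>\<^sub>m B) ((- z' / 2) \<cdot>\<^sub>m mat_adjoint B) (l \<cdot>\<^sub>m 1\<^sub>m N - Hmat Y \<theta>))"
    from i j have i': "i < m + N" and j': "j < m + N" using Y B Hmat_carrier[OF Y, of \<theta>] by auto
    show "(l \<cdot>\<^sub>m 1\<^sub>m (m + N) - Hmat (A_op B Y) \<theta> - a \<cdot>\<^sub>m four_block_mat (1\<^sub>m m) (0\<^sub>m m N) (0\<^sub>m N m) (0\<^sub>m N N)) $$ (i, j) =
         four_block_mat ((l - a) \<cdot>\<^sub>m 1\<^sub>m m) ((- z / 2) \<cdot>\<^sub>m B) ((- z' / 2) \<cdot>\<^sub>m mat_adjoint B) (l \<cdot>\<^sub>m 1\<^sub>m N - Hmat Y \<theta>) $$ (i, j)"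
      unfolding X using i' j' Y B 
      by (auto simp: hd Hmat_index[OF Xc'] Hmat_index[OF Y] z_def z'_def field_simps)
  qed (insert Y B, auto simp: hd)
  have cM: "l \<cdot>\<^sub>m 1\<^sub>m N - Hmat Y \<theta> \<in> carrier_mat N N" unfolding carrier_mat_def using hd by simp
  from this[unfolded carrier_mat_def] \<open>?M = _\<close> have "G (A_op B Y) \<theta> l a = det (four_block_mat ((l - a) \<cdot>\<^sub>m 1\<^sub>m m) ((- z / 2) \<cdot>\<^sub>m B) ((- z' / 2) \<cdot>\<^sub>m mat_adjoint B) (l \<cdot>\<^sub>m 1\<^sub>m N - Hmat Y \<theta>))"
    unfolding G_def dr by simp
  also have "\<dots> = (l - a)^m * det ((l \<cdot>\<^sub>m 1\<^sub>m N - Hmat Y \<theta>) - (1 / (l - a)) \<cdot>\<^sub>m (((- z' / 2) \<cdot>\<^sub>m mat_adjoint B) * ((- z / 2) \<cdot>\<^sub>m B)))"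
    by (rule schur_det[OF cM _ _ ], insert B la, auto)
  also have "((- z' / 2) \<cdot>\<^sub>m mat_adjoint B) * ((- z / 2) \<cdot>\<^sub>m B) = (1/4) \<cdot>\<^sub>m defect Y"
  proof -
    have "((- z' / 2) \<cdot>\<^sub>m mat_adjoint B) * ((- z / 2) \<cdot>\<^sub>m B) = (- z' / 2) \<cdot>\<^sub>m (mat_adjoint B * ((- z / 2) \<cdot>\<^sub>m B))"
      by (rule mult_smult_assoc_mat[of _ N m _ N], insert B, auto)
    also have "mat_adjoint B * ((- z / 2) \<cdot>\<^sub>m B) = (- z / 2) \<cdot>\<^sub>m (mat_adjoint B * B)"
      by (rule mult_smult_distrib[of _ N m _ N], insert B, auto)
    finally show ?thesis unfolding BB smult_smult_mat using zz by (simp add: field_simps)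
  qed
  also have "(l \<cdot>\<^sub>m 1\<^sub>m N - Hmat Y \<theta>) - (1 / (l - a)) \<cdot>\<^sub>m ((1/4) \<cdot>\<^sub>m defect Y) = l \<cdot>\<^sub>m 1\<^sub>m (dim_row Y) - Hmat Y \<theta> - (1 / (4 * (l - a))) \<cdot>\<^sub>m defect Y"
    unfolding smult_smult_mat using Y by (simp add: mult.commute)
  finally show ?thesis unfolding G_def .
qed


lemma poly_crh: "comm_ring_hom (\<lambda>p. poly p (t :: 'a :: comm_ring_1))"
  by (unfold_locales, auto)

lemma poly_det_hom: "poly (det P) t = det (map_mat (\<lambda>p. poly p t) P)"
  by (rule comm_ring_hom.hom_det[OF poly_crh, symmetric])

lemma det_poly_degree:
  fixes P :: "complex poly mat"
  assumes P: "P \<in> carrier_mat N N"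
    and deg: "\<And>i j. i < N \<Longrightarrow> j < N \<Longrightarrow> degree (P $$ (i,j)) \<le> (if d \<le> i \<and> j < d then 1 else 0)"
  shows "degree (det P) \<le> d"
proof -
  have "degree (det P) = degree (\<Sum>p \<in> {p. p permutes {0..<N}}. signof p * (\<Prod>i = 0..<N. P $$ (i, p i)))"
    using det_def'[OF P] by simp
  also have "\<dots> \<le> d"
  proof (rule degree_sum_le)
    show "finite {p. p permutes {0..<N}}" by (simp add: finite_permutations)
    fix p assume "p \<in> {p. p permutes {0..<N}}"
    hence p: "p permutes {0..<N}" by simp
    have inj: "inj_on p {i \<in> {0..<N}. d \<le> i \<and> p i < d}" using p by (meson inj_on_subset permutes_inj subset_UNIV)
    have "degree (signof p * (\<Prod>i = 0..<N. P $$ (i, p i))) \<le> degree (signof p :: complex poly) + degree (\<Prod>i = 0..<N. P $$ (i, p i))"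
      by (rule degree_mult_le)
    also have "degree (signof p :: complex poly) = 0" by simp
    also have "degree (\<Prod>i = 0..<N. P $$ (i, p i)) \<le> (\<Sum>i = 0..<N. (degree \<circ> (\<lambda>i. P $$ (i, p i))) i)"
      by (rule degree_prod_sum_le, simp)
    also have "\<dots> \<le> (\<Sum>i = 0..<N. (if d \<le> i \<and> p i < d then 1 else 0))"
      by (rule sum_mono, insert deg permutes_in_image[OF p], auto)
    also have "\<dots> = card {i \<in> {0..<N}. d \<le> i \<and> p i < d}"
      by (simp add: sum.inter_filter[symmetric])
    also have "\<dots> \<le> card {0..<d}"
      by (rule card_inj_on_le[OF inj], auto)
    finally show "degree (signof p * (\<Prod>i = 0..<N. P $$ (i, p i))) \<le> d" by simp
  qed
  finally show ?thesis .
qed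

lemma G_poly: assumes C: "C \<in> carrier_mat n n" and B: "B \<in> carrier_mat d n"
  and BB: "mat_adjoint B * B = defect C"
  shows "\<exists>Q. degree Q \<le> d \<and> (\<forall>t. poly Q t = G C \<theta> l t)"
proof -
  define M where "M = l \<cdot>\<^sub>m 1\<^sub>m n - Hmat C \<theta>"
  have M: "M \<in> carrier_mat n n" unfolding M_def using Hmat_carrier[OF C, of \<theta>] unfolding carrier_mat_def by simp
  define P where "P = four_block_mat (map_mat (\<lambda>x. [:x:]) (1\<^sub>m d)) (map_mat (\<lambda>x. [:x:]) B)
     (map_mat (\<lambda>x. [:0,x:]) (mat_adjoint B)) (map_mat (\<lambda>x. [:x:]) M)"
  have P: "P \<in> carrier_mat (d+n) (d+n)" unfolding P_def using M B by auto
  have deg: "degree (det P) \<le> d"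
  proof (rule det_poly_degree[OF P])
    fix i j assume i: "i < d + n" and j: "j < d + n"
    show "degree (P $$ (i, j)) \<le> (if d \<le> i \<and> j < d then 1 else 0)"
      unfolding P_def using i j M B by auto
  qed
  have ev: "poly (det P) t = G C \<theta> l t" for t
  proof -
    have "map_mat (\<lambda>p. poly p t) P = four_block_mat (1 \<cdot>\<^sub>m 1\<^sub>m d) B (t \<cdot>\<^sub>m mat_adjoint B) M"
      unfolding P_def using M B by (intro eq_matI, auto)
    hence "poly (det P) t = det (four_block_mat (1 \<cdot>\<^sub>m 1\<^sub>m d) B (t \<cdot>\<^sub>m mat_adjoint B) M)"
      unfolding poly_det_hom by simp
    also have "\<dots> = 1^d * det (M - (1/1) \<cdot>\<^sub>m ((t \<cdot>\<^sub>m mat_adjoint B) * B))"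
      by (rule schur_det[OF M B], insert B, auto)
    also have "(t \<cdot>\<^sub>m mat_adjoint B) * B = t \<cdot>\<^sub>m (mat_adjoint B * B)"
      by (rule mult_smult_assoc_mat[of _ n d _ n], insert B, auto)
    finally show ?thesis unfolding G_def BB M_def using C by simp
  qed
  show ?thesis using deg ev by blast
qed
lemma real_fin_range_const:
  fixes g :: "real \<Rightarrow> real"
  assumes cont: "continuous_on UNIV g" and fin: "finite (range g)"
  shows "g x = g y"
proof (rule ccontr)
  assume ne: "g x \<noteq> g y"
  { fix x y :: real assume xy: "x \<le> y" and ne: "g x \<noteq> g y"
    have c: "continuous_on {x..y} g" using cont continuous_on_subset by blast
    have sub: "{min (g x) (g y) .. max (g x) (g y)} \<subseteq> range g"
    proof
      fix z assume z: "z \<in> {min (g x) (g y) .. max (g x) (g y)}"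
      show "z \<in> range g"
      proof (cases "g x \<le> g y")
        case True
        then obtain t where "g t = z" using IVT'[of g x z y, OF _ _ xy c] z by auto
        thus ?thesis by auto
      next
        case False
        then obtain t where "g t = z" using IVT2'[of g y z x, OF _ _ xy c] z by auto
        thus ?thesis by auto
      qed
    qed
    have "infinite {min (g x) (g y) .. max (g x) (g y)}" using ne by (intro infinite_Icc, auto)
    hence False using sub fin finite_subset by blast
  }
  note * = this
  show False
  proof (cases "x \<le> y")
    case True show ?thesis using *[OF True ne] by simp
  next
    case False thus ?thesis using *[of y x] ne by auto
  qed
qed

lemma cplx_fin_range_const:
  fixes f :: "real \<Rightarrow> complex"
  assumes cont: "continuous_on UNIV f" and fin: "finite (range f)"
  shows "f x = f y"
proof -
  have "Re (f x) = Re (f y)"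
    by (rule real_fin_range_const[of "\<lambda>t. Re (f t)"], 
        insert cont fin, auto intro!: continuous_intros simp: image_image[symmetric])
  moreover have "Im (f x) = Im (f y)"
    by (rule real_fin_range_const[of "\<lambda>t. Im (f t)"], 
        insert cont fin, auto intro!: continuous_intros simp: image_image[symmetric])
  ultimately show ?thesis by (simp add: complex_eq_iff)
qed



lemma defect_carrier[simp]: "X \<in> carrier_mat N N \<Longrightarrow> defect X \<in> carrier_mat N N"
  unfolding defect_def by auto

lemma G0_entries: assumes X: "X \<in> carrier_mat N N"
  shows "G X \<theta> l 0 = (\<Sum>p\<in>{p. p permutes {0..<N}}. signof p * (\<Prod>i=0..<N.
     l * (if i = p i then 1 else 0) - (1/2) * (exp (- \<i> * of_real \<theta>) * X $$ (i, p i) + exp (\<i> * of_real \<theta>) * cnj (X $$ (p i, i)))))"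
proof -
  have H: "Hmat X \<theta> \<in> carrier_mat N N" using X by simp
  have D: "defect X \<in> carrier_mat N N" using X by simp
  let ?M = "l \<cdot>\<^sub>m 1\<^sub>m N - Hmat X \<theta> - 0 \<cdot>\<^sub>m defect X"
  have M: "?M \<in> carrier_mat N N" using H D by auto
  have entry: "\<And>i j. i < N \<Longrightarrow> j < N \<Longrightarrow> ?M $$ (i, j) =
       l * (if i = j then 1 else 0) - (1/2) * (exp (- \<i> * of_real \<theta>) * X $$ (i, j) + exp (\<i> * of_real \<theta>) * cnj (X $$ (j, i)))"
    using H D by (simp add: Hmat_index[OF X])
  have "G X \<theta> l 0 = det ?M" unfolding G_def using X by simp
  also have "\<dots> = (\<Sum>p\<in>{p. p permutes {0..<N}}. signof p * (\<Prod>i=0..<N. ?M $$ (i, p i)))"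
    by (rule det_def'[OF M])
  also have "\<dots> = (\<Sum>p\<in>{p. p permutes {0..<N}}. signof p * (\<Prod>i=0..<N.
     l * (if i = p i then 1 else 0) - (1/2) * (exp (- \<i> * of_real \<theta>) * X $$ (i, p i) + exp (\<i> * of_real \<theta>) * cnj (X $$ (p i, i)))))"
  proof (rule sum.cong[OF refl])
    fix p assume p: "p \<in> {p. p permutes {0..<N}}"
    have "(\<Prod>i=0..<N. ?M $$ (i, p i)) = (\<Prod>i=0..<N.
     l * (if i = p i then 1 else 0) - (1/2) * (exp (- \<i> * of_real \<theta>) * X $$ (i, p i) + exp (\<i> * of_real \<theta>) * cnj (X $$ (p i, i))))"
    proof (rule prod.cong[OF refl])
      fix i assume i: "i \<in> {0..<N}"
      have pi: "p i < N" using p i permutes_in_image by fastforce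
      show "?M $$ (i, p i) = l * (if i = p i then 1 else 0) - (1/2) * (exp (- \<i> * of_real \<theta>) * X $$ (i, p i) + exp (\<i> * of_real \<theta>) * cnj (X $$ (p i, i)))"
        using entry[OF _ pi] i by simp
    qed
    thus "signof p * (\<Prod>i=0..<N. ?M $$ (i, p i)) = signof p * (\<Prod>i=0..<N.
     l * (if i = p i then 1 else 0) - (1/2) * (exp (- \<i> * of_real \<theta>) * X $$ (i, p i) + exp (\<i> * of_real \<theta>) * cnj (X $$ (p i, i))))" by simp
  qed
  finally show ?thesis .
qed

lemma G0_cont: assumes X: "X \<in> carrier_mat N N"
  shows "continuous_on UNIV (\<lambda>\<theta>. G X \<theta> l 0)"
  unfolding G0_entries[OF X]
  apply (intro continuous_on_sum continuous_on_mult continuous_on_const continuous_on_prod)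
  apply (intro continuous_intros)
  done

lemma G0_char: assumes X: "X \<in> carrier_mat N N"
  shows "G X \<theta> l 0 = poly (char_poly (Hmat X \<theta>)) l"
proof -
  have H: "Hmat X \<theta> \<in> carrier_mat N N" using X by simp
  have D: "defect X \<in> carrier_mat N N" using X by simp
  have dims: "dim_row (Hmat X \<theta>) = N" "dim_col (Hmat X \<theta>) = N" "dim_row (defect X) = N" "dim_col (defect X) = N" "dim_row X = N"
    using carrier_matD[OF H] carrier_matD[OF D] carrier_matD[OF X] by auto
  have "- char_matrix (Hmat X \<theta>) l = l \<cdot>\<^sub>m 1\<^sub>m (dim_row X) - Hmat X \<theta> - 0 \<cdot>\<^sub>m defect X"
    unfolding char_matrix_def proof (rule eq_matI)
    fix i j assume "i < dim_row (l \<cdot>\<^sub>m 1\<^sub>m (dim_row X) - Hmat X \<theta> - 0 \<cdot>\<^sub>m defect X)" "j < dim_col (l \<cdot>\<^sub>m 1\<^sub>m (dim_row X) - Hmat X \<theta> - 0 \<cdot>\<^sub>m defect X)"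
    hence ij: "i < N" "j < N" by (simp_all add: dims)
    show "(- (Hmat X \<theta> + - l \<cdot>\<^sub>m 1\<^sub>m (dim_row (Hmat X \<theta>)))) $$ (i, j) = (l \<cdot>\<^sub>m 1\<^sub>m (dim_row X) - Hmat X \<theta> - 0 \<cdot>\<^sub>m defect X) $$ (i, j)"
      using ij by (simp add: dims)
  qed (simp_all add: dims)
  thus ?thesis unfolding char_poly_matrix[OF H] G_def by simp
qed

lemma circ_char: assumes X: "X \<in> carrier_mat N N"
  shows "circularity X \<longleftrightarrow> (\<forall>\<theta> \<theta>' (r::real). r \<in> {1..2} \<longrightarrow> G X \<theta> (of_real r) 0 = G X \<theta>' (of_real r) 0)"
proof
  assume circ: "circularity X"
  define S where "S = spectrum_mat (Hmat X 0)"
  have H: "\<And>\<theta>. Hmat X \<theta> \<in> carrier_mat N N" using X by simp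
  have spec: "\<And>\<theta>. spectrum_mat (Hmat X \<theta>) = S" using circ unfolding circularity_def S_def by auto
  have Sr: "S = {k. poly (char_poly (Hmat X 0)) k = 0}"
    unfolding S_def spectrum_mat_def eigenvalue_root_char_poly[OF H] ..
  have nz: "char_poly (Hmat X 0) \<noteq> 0" using degree_monic_char_poly[OF H[of 0]] by auto
  have finS: "finite S" unfolding Sr by (rule poly_roots_finite[OF nz])
  define \<Phi> where "\<Phi> = (\<lambda>as. \<Prod>a\<leftarrow>as. [:- a, 1:]) ` {as. set as \<subseteq> S \<and> length as = N}"
  have fin\<Phi>: "finite \<Phi>" unfolding \<Phi>_def by (intro finite_imageI finite_lists_length_eq finS)
  have mem: "char_poly (Hmat X \<theta>) \<in> \<Phi>" for \<theta>
  proof -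
    obtain as where as: "char_poly (Hmat X \<theta>) = (\<Prod>a\<leftarrow>as. [:- a, 1:])" "length as = N"
      using char_poly_factorized[OF H[of \<theta>]] by auto
    have "set as \<subseteq> S"
    proof
      fix a assume a: "a \<in> set as"
      have "poly (char_poly (Hmat X \<theta>)) a = 0" unfolding as(1) poly_prod_list prod_list_zero_iff
        using a by auto
      hence "a \<in> spectrum_mat (Hmat X \<theta>)" unfolding spectrum_mat_def eigenvalue_root_char_poly[OF H] by simp
      thus "a \<in> S" using spec by simp
    qed
    thus ?thesis unfolding \<Phi>_def using as by auto
  qed
  show "\<forall>\<theta> \<theta>' (r::real). r \<in> {1..2} \<longrightarrow> G X \<theta> (of_real r) 0 = G X \<theta>' (of_real r) 0"
  proof (intro allI impI)
    fix \<theta> \<theta>' :: real and r :: real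
    have "range (\<lambda>\<theta>. G X \<theta> (of_real r) 0) \<subseteq> (\<lambda>q. poly q (of_real r)) ` \<Phi>"
      unfolding G0_char[OF X] using mem by auto
    hence "finite (range (\<lambda>\<theta>. G X \<theta> (of_real r) 0))" using fin\<Phi> finite_subset by blast
    thus "G X \<theta> (of_real r) 0 = G X \<theta>' (of_real r) 0"
      using cplx_fin_range_const[OF G0_cont[OF X]] by blast
  qed
next
  assume eq: "\<forall>\<theta> \<theta>' (r::real). r \<in> {1..2} \<longrightarrow> G X \<theta> (of_real r) 0 = G X \<theta>' (of_real r) 0"
  have H: "\<And>\<theta>. Hmat X \<theta> \<in> carrier_mat N N" using X by simp
  show "circularity X" unfolding circularity_def
  proof (intro allI)
    fix \<theta> \<theta>' :: real
    let ?q = "char_poly (Hmat X \<theta>) - char_poly (Hmat X \<theta>')"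
    have "of_real ` {1..2::real} \<subseteq> {x. poly ?q x = 0}"
      using eq unfolding G0_char[OF X] by auto
    moreover have "infinite (of_real ` {1..2::real} :: complex set)"
    proof
      assume "finite (of_real ` {1..2::real} :: complex set)"
      hence "finite {1..2::real}" by (rule finite_imageD, auto simp: inj_on_def)
      thus False using infinite_Icc[of "1::real" 2] by simp
    qed
    ultimately have "infinite {x. poly ?q x = 0}" using finite_subset by blast
    hence "?q = 0" using poly_roots_finite by blast
    hence "char_poly (Hmat X \<theta>) = char_poly (Hmat X \<theta>')" by simp
    thus "spectrum_mat (Hmat X \<theta>) = spectrum_mat (Hmat X \<theta>')"
      unfolding spectrum_mat_def eigenvalue_root_char_poly[OF H] by simp
  qed
qed

definition ff :: "real \<Rightarrow> real \<Rightarrow> real" where "ff r x = 1 / (4 * (r - x))"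

lemma ff_range: assumes "1 \<le> r" "0 \<le> x" "x \<le> 1/2" shows "0 < ff r x" "ff r x \<le> 1/2"
proof -
  have p: "r - x \<ge> 1/2" using assms by simp
  show "0 < ff r x" unfolding ff_def using p by simp
  have "4 * (r - x) \<ge> 2" using p by simp
  thus "ff r x \<le> 1/2" unfolding ff_def by (simp add: divide_simps)
qed

lemma ff_pow_range: assumes "1 \<le> r" "0 \<le> x" "x \<le> 1/2" shows "0 \<le> (ff r ^^ j) x \<and> (ff r ^^ j) x \<le> 1/2"
  using assms by (induction j, auto dest: ff_range[of r] intro: less_imp_le)

lemma ff_mono: assumes "1 \<le> r" "x < y" "y \<le> 1/2" shows "ff r x < ff r y"
proof -
  have "r - y > 0" using assms by simp
  moreover have "r - y < r - x" using assms by simp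
  ultimately show ?thesis unfolding ff_def by (simp add: divide_simps)
qed

lemma ff_strict_mono: assumes r: "1 \<le> r" shows "strict_mono (\<lambda>j. (ff r ^^ j) 0)"
unfolding strict_mono_Suc_iff
proof
  fix j
  show "(ff r ^^ j) 0 < (ff r ^^ Suc j) 0"
  proof (induction j)
    case 0 thus ?case using ff_range[OF r, of 0] by simp
  next
    case (Suc j)
    have "(ff r ^^ Suc j) 0 \<le> 1/2" using ff_pow_range[OF r, of 0 "Suc j"] by simp
    thus ?case using ff_mono[OF r Suc] by simp
  qed
qed

lemma tower_carrier: assumes T: "is_tower C T" and C: "C \<in> carrier_mat n n"
  shows "\<exists>N. T j \<in> carrier_mat N N"
proof (induction j)
  case 0 thus ?case using T C unfolding is_tower_def by auto
next
  case (Suc j)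
  then obtain N where TN: "T j \<in> carrier_mat N N" by auto
  obtain B where B: "is_B (T j) B" and TS: "T (Suc j) = A_op B (T j)" using T unfolding is_tower_def by blast
  obtain m where Bm: "B \<in> carrier_mat m N" using B TN unfolding is_B_def Let_def by auto
  show ?case unfolding TS A_op_def using Bm TN by (intro exI[of _ "m + N"], auto)
qed

lemma tower_G: assumes T: "is_tower C T" and C: "C \<in> carrier_mat n n" and r: "1 \<le> r"
  shows "0 \<le> a \<Longrightarrow> a \<le> 1/2 \<Longrightarrow> \<exists>h. h \<noteq> 0 \<and> (\<forall>\<theta>. G (T j) \<theta> (of_real r) (of_real a) = h * G C \<theta> (of_real r) (of_real ((ff r ^^ j) a)))"
proof (induction j arbitrary: a)
  case 0 thus ?case using T unfolding is_tower_def by (intro exI[of _ 1], auto)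
next
  case (Suc j a)
  obtain N where TN: "T j \<in> carrier_mat N N" using tower_carrier[OF T C] by blast
  obtain B where B: "is_B (T j) B" and TS: "T (Suc j) = A_op B (T j)" using T unfolding is_tower_def by blast
  obtain m where Bm: "B \<in> carrier_mat m N" and BB: "mat_adjoint B * B = defect (T j)" 
    using B TN unfolding is_B_def Let_def by auto
  have ra: "complex_of_real r \<noteq> complex_of_real a" using Suc.prems r by auto
  have fr: "0 \<le> ff r a" "ff r a \<le> 1/2" using ff_range[OF r Suc.prems] by auto
  obtain h where h: "h \<noteq> 0" and hG: "\<And>\<theta>. G (T j) \<theta> (of_real r) (of_real (ff r a)) = h * G C \<theta> (of_real r) (of_real ((ff r ^^ j) (ff r a)))"
    using Suc.IH[OF fr] by blast
  have cf: "1 / (4 * (complex_of_real r - complex_of_real a)) = complex_of_real (ff r a)" unfolding ff_def by simp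
  show ?case
  proof (intro exI[of _ "(complex_of_real r - complex_of_real a)^m * h"] conjI allI)
    show "(complex_of_real r - complex_of_real a)^m * h \<noteq> 0" using h ra by simp
    fix \<theta>
    have "G (T (Suc j)) \<theta> (of_real r) (of_real a) = (complex_of_real r - complex_of_real a)^m * G (T j) \<theta> (of_real r) (1 / (4 * (complex_of_real r - complex_of_real a)))"
      unfolding TS by (rule G_A_op[OF TN Bm BB ra])
    also have "\<dots> = (complex_of_real r - complex_of_real a)^m * h * G C \<theta> (of_real r) (of_real ((ff r ^^ Suc j) a))"
      unfolding cf hG funpow_Suc_right by simp
    finally show "G (T (Suc j)) \<theta> (of_real r) (of_real a) = (complex_of_real r - complex_of_real a)^m * h * G C \<theta> (of_real r) (of_real ((ff r ^^ Suc j) a))" .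
  qed
qed

definition Phi :: "complex mat \<Rightarrow> nat \<Rightarrow> bool" where
  "Phi C j = (\<forall>\<theta> \<theta>' (r::real). r \<in> {1..2} \<longrightarrow> G C \<theta> (of_real r) (of_real ((ff r ^^ j) 0)) = G C \<theta>' (of_real r) (of_real ((ff r ^^ j) 0)))"

lemma circ_Phi: assumes T: "is_tower C T" and C: "C \<in> carrier_mat n n"
  shows "circularity (T j) \<longleftrightarrow> Phi C j"
proof -
  obtain N where TN: "T j \<in> carrier_mat N N" using tower_carrier[OF T C] by blast
  have "(\<forall>\<theta> \<theta>' (r::real). r \<in> {1..2} \<longrightarrow> G (T j) \<theta> (of_real r) 0 = G (T j) \<theta>' (of_real r) 0) \<longleftrightarrow> Phi C j"
    unfolding Phi_def
  proof (intro iffI allI impI)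
    fix \<theta> \<theta>' :: real and r :: real
    assume r: "r \<in> {1..2}"
    obtain h where h: "h \<noteq> 0" and hG: "\<And>\<theta>. G (T j) \<theta> (of_real r) (of_real 0) = h * G C \<theta> (of_real r) (of_real ((ff r ^^ j) 0))"
      using tower_G[OF T C, of r 0 j] r by auto
    {
      assume "\<forall>\<theta> \<theta>' (r::real). r \<in> {1..2} \<longrightarrow> G (T j) \<theta> (of_real r) 0 = G (T j) \<theta>' (of_real r) 0"
      hence "G (T j) \<theta> (of_real r) (of_real 0) = G (T j) \<theta>' (of_real r) (of_real 0)" using r by simp
      thus "G C \<theta> (of_real r) (of_real ((ff r ^^ j) 0)) = G C \<theta>' (of_real r) (of_real ((ff r ^^ j) 0))"
        unfolding hG using h by simp
    }
    {
      assume "\<forall>\<theta> \<theta>' (r::real). r \<in> {1..2} \<longrightarrow> G C \<theta> (of_real r) (of_real ((ff r ^^ j) 0)) = G C \<theta>' (of_real r) (of_real ((ff r ^^ j) 0))"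
      hence "G C \<theta> (of_real r) (of_real ((ff r ^^ j) 0)) = G C \<theta>' (of_real r) (of_real ((ff r ^^ j) 0))" using r by simp
      hence "G (T j) \<theta> (of_real r) (of_real 0) = G (T j) \<theta>' (of_real r) (of_real 0)" unfolding hG by simp
      thus "G (T j) \<theta> (of_real r) 0 = G (T j) \<theta>' (of_real r) 0" by simp
    }
  qed
  thus ?thesis using circ_char[OF TN] by simp
qed

lemma Phi_all: assumes C: "C \<in> carrier_mat n n" and B: "B \<in> carrier_mat d n"
  and BB: "mat_adjoint B * B = defect C"
  and J: "finite J" "card J = d + 1" and PJ: "\<forall>j\<in>J. Phi C j"
  shows "Phi C k"
  unfolding Phi_def
proof (intro allI impI)
  fix \<theta> \<theta>' :: real and r :: real
  assume r: "r \<in> {1..2}"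
  hence r1: "1 \<le> r" by simp
  obtain Q1 where Q1: "degree Q1 \<le> d" "\<And>t. poly Q1 t = G C \<theta> (of_real r) t" using G_poly[OF C B BB] by blast
  obtain Q2 where Q2: "degree Q2 \<le> d" "\<And>t. poly Q2 t = G C \<theta>' (of_real r) t" using G_poly[OF C B BB] by blast
  define Q where "Q = Q1 - Q2"
  have dQ: "degree Q \<le> d" unfolding Q_def using Q1(1) Q2(1) degree_diff_le by blast
  define c where "c = (\<lambda>j. complex_of_real ((ff r ^^ j) 0))"
  have inj: "inj c" unfolding c_def using strict_mono_imp_inj_on[OF ff_strict_mono[OF r1]]
    by (auto simp: inj_on_def)
  have sub: "c ` J \<subseteq> {x. poly Q x = 0}"
    using PJ r unfolding Phi_def Q_def c_def by (auto simp: Q1(2) Q2(2))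
  have cardR: "card (c ` J) = d + 1" using card_image[OF inj_on_subset[OF inj]] J by auto
  have "Q = 0"
  proof (rule ccontr)
    assume nz: "Q \<noteq> 0"
    have "card (c ` J) \<le> card {x. poly Q x = 0}" by (rule card_mono[OF poly_roots_finite[OF nz] sub])
    also have "\<dots> \<le> degree Q" by (rule card_poly_roots_bound[OF nz])
    finally show False using cardR dQ by simp
  qed
  hence "poly Q1 t = poly Q2 t" for t unfolding Q_def by simp
  thus "G C \<theta> (of_real r) (of_real ((ff r ^^ k) 0)) = G C \<theta>' (of_real r) (of_real ((ff r ^^ k) 0))"
    using Q1(2) Q2(2) by metis
qed

theorem mainTheorem5:
  fixes C :: "complex mat" and n d :: nat and T :: "nat \<Rightarrow> complex mat"
  assumes "C \<in> carrier_mat n n"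
    and "contraction C"
    and "d = vec_space.rank n (1\<^sub>m n - mat_adjoint C * C)"
    and "is_tower C T"
  shows "((\<forall>j. circularity (T j)) \<longleftrightarrow> (\<forall>j\<in>{1..d+1}. circularity (T j)))
       \<and> ((\<forall>j. circularity (T j)) \<longleftrightarrow> (\<forall>j\<in>{0..d}. circularity (T j)))"
proof -
  note C = assms(1) and T = assms(4)
  obtain B where B0: "is_B C B" using T unfolding is_tower_def by metis
  have dc: "dim_col C = n" using C by auto
  have B: "B \<in> carrier_mat d n" and BB: "mat_adjoint B * B = defect C"
    using B0 unfolding is_B_def Let_def dc defect_def assms(3) by auto
  have key: "\<And>J. finite J \<Longrightarrow> card J = d + 1 \<Longrightarrow> (\<forall>j. circularity (T j)) \<longleftrightarrow> (\<forall>j\<in>J. circularity (T j))"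
  proof
    fix J :: "nat set" assume J: "finite J" "card J = d + 1"
    assume "\<forall>j\<in>J. circularity (T j)"
    hence "\<forall>j\<in>J. Phi C j" using circ_Phi[OF T C] by blast
    hence "\<And>k. Phi C k" using Phi_all[OF C B BB J] by blast
    thus "\<forall>j. circularity (T j)" using circ_Phi[OF T C] by blast
  qed auto
  show ?thesis using key[of "{1..d+1}"] key[of "{0..d}"] by simp
qed
end
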